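(* Let $\mathbb W=(W,I,\preccurlyeq,\circ,{}^\sim,{}^-,{}^\neg)$ be a DqRA-frame. Then $(x^\sim)^\neg=(x^\neg)^-$ for all $x\in W$.
   Context: For a set $W$ and $\circ:W\times W\to\mathcal P(W)$, $U\circ V=\bigcup\{a\circ b\mid a\in U,b\in V\}$, $x\circ V=\{x\}\circ V$, $U\circ y=U\circ\{y\}$; superscripts compose left to right, e.g. $x^{\sim\neg}=(x^\sim)^\neg$. A DInFL-frame is a tuple $(W,I,\preccurlyeq,\circ,{}^\sim,{}^-)$ with $I\subseteq W$, $\preccurlyeq$ a partial order, $\circ:W\times W\to\mathcal P(W)$, ${}^\sim,{}^-:W\to W$, such that for all $u,v,x,y,z$: (F1) $x\preccurlyeq y$ iff $y\in I\circ x$ iff $y\in x\circ I$; (F2) $x\preccurlyeq y$, $x\in I$ imply $y\in I$; (F3) $x\preccurlyeq y$, $x\in u\circ v$ imply $y\in u\circ v$; (F4) $(x\circ y)\circ z=x\circ(y\circ z)$; (F5) $z^\sim\in x\circ y$ iff $y^-\in z\circ x$; (F6) $x^{\sim-}\preccurlyeq x$ and $x^{-\sim}\preccurlyeq x$. A DqRA-frame is a tuple $(W,I,\preccurlyeq,\circ,{}^\sim,{}^-,{}^\neg)$ such that $(W,I,\preccurlyeq,\circ,{}^\sim,{}^-)$ is a DInFL-frame and ${}^\neg:W\to W$ satisfies for all $x,y,z$: (F7) $x^{\neg\neg}=x$; (F8) $x\preccurlyeq y$ implies $y^\neg\preccurlyeq x^\neg$; (F9) $z^-\in x\circ y$ iff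 $z^\neg\in y^{\sim\neg}\circ x^{\sim\neg}$. *)

theory Defs
  imports Main
begin

definition setcirc :: "('a \<Rightarrow> 'a \<Rightarrow> 'a set) \<Rightarrow> 'a set \<Rightarrow> 'a set \<Rightarrow> 'a set" where
  "setcirc c U V = \<Union> {c a b | a b. a \<in> U \<and> b \<in> V}"

definition DInFL_frame ::
  "'a set \<Rightarrow> 'a set \<Rightarrow> ('a \<Rightarrow> 'a \<Rightarrow> bool) \<Rightarrow> ('a \<Rightarrow> 'a \<Rightarrow> 'a set)
   \<Rightarrow> ('a \<Rightarrow> 'a) \<Rightarrow> ('a \<Rightarrow> 'a) \<Rightarrow> bool" where
  "DInFL_frame W I le c tld mn \<longleftrightarrow>
     I \<subseteq> W
   \<and> (\<forall>x\<in>W. \<forall>y\<in>W. c x y \<subseteq> W)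
   \<and> (\<forall>x\<in>W. tld x \<in> W) \<and> (\<forall>x\<in>W. mn x \<in> W)
   \<and> (\<forall>x\<in>W. le x x)
   \<and> (\<forall>x\<in>W. \<forall>y\<in>W. le x y \<and> le y x \<longrightarrow> x = y)
   \<and> (\<forall>x\<in>W. \<forall>y\<in>W. \<forall>z\<in>W. le x y \<and> le y z \<longrightarrow> le x z)
   \<and> (\<forall>x\<in>W. \<forall>y\<in>W. (le x y \<longleftrightarrow> y \<in> setcirc c I {x}) \<and> (le x y \<longleftrightarrow> y \<in> setcirc c {x} I))
   \<and> (\<forall>x\<in>W. \<forall>y\<in>W. le x y \<and> x \<in> I \<longrightarrow> y \<in> I)
   \<and> (\<forall>x\<in>W. \<forall>y\<in>W. \<forall>u\<in>W. \<forall>v\<in>W. le x y \<and> x \<in> c u v \<longrightarrow> y \<in> c u v)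
   \<and> (\<forall>x\<in>W. \<forall>y\<in>W. \<forall>z\<in>W. setcirc c (c x y) {z} = setcirc c {x} (c y z))
   \<and> (\<forall>x\<in>W. \<forall>y\<in>W. \<forall>z\<in>W. tld z \<in> c x y \<longleftrightarrow> mn y \<in> c z x)
   \<and> (\<forall>x\<in>W. le (mn (tld x)) x \<and> le (tld (mn x)) x)"

definition DqRA_frame ::
  "'a set \<Rightarrow> 'a set \<Rightarrow> ('a \<Rightarrow> 'a \<Rightarrow> bool) \<Rightarrow> ('a \<Rightarrow> 'a \<Rightarrow> 'a set)
   \<Rightarrow> ('a \<Rightarrow> 'a) \<Rightarrow> ('a \<Rightarrow> 'a) \<Rightarrow> ('a \<Rightarrow> 'a) \<Rightarrow> bool" where
  "DqRA_frame W I le c tld mn ng \<longleftrightarrow>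
     DInFL_frame W I le c tld mn
   \<and> (\<forall>x\<in>W. ng x \<in> W)
   \<and> (\<forall>x\<in>W. ng (ng x) = x)
   \<and> (\<forall>x\<in>W. \<forall>y\<in>W. le x y \<longrightarrow> le (ng y) (ng x))
   \<and> (\<forall>x\<in>W. \<forall>y\<in>W. \<forall>z\<in>W. mn z \<in> c x y \<longleftrightarrow> ng z \<in> c (ng (tld y)) (ng (tld x)))"

end

theory Submission
  imports Defs
begin

lemma setcirc_single: "y \<in> setcirc c {x} I \<longleftrightarrow> (\<exists>i\<in>I. y \<in> c x i)"
  unfolding setcirc_def by blast

theorem mainTheorem8:
  assumes "DqRA_frame W I le c tld mn ng"
    and "x \<in> W"
  shows "ng (tld x) = mn (ng x)"
proof -
  have D: "DInFL_frame W I le c tld mn" and Q: "\<forall>x\<in>W. ng x \<in> W" "\<forall>x\<in>W. ng (ng x) = x"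
    "\<forall>x\<in>W. \<forall>y\<in>W. \<forall>z\<in>W. mn z \<in> c x y \<longleftrightarrow> ng z \<in> c (ng (tld y)) (ng (tld x))"
    using assms(1) unfolding DqRA_frame_def by blast+

  note DD = D[unfolded DInFL_frame_def]
  have IW: "I \<subseteq> W" using DD by (elim conjE) assumption
  have tW0: "\<forall>x\<in>W. tld x \<in> W" using DD by (elim conjE) assumption
  have mW0: "\<forall>x\<in>W. mn x \<in> W" using DD by (elim conjE) assumption
  have refl0: "\<forall>x\<in>W. le x x" using DD by (elim conjE) assumption
  have anti0: "\<forall>x\<in>W. \<forall>y\<in>W. le x y \<and> le y x \<longrightarrow> x = y" using DD by (elim conjE) assumption
  have F10: "\<forall>x\<in>W. \<forall>y\<in>W. (le x y \<longleftrightarrow> y \<in> setcirc c I {x}) \<and> (le x y \<longleftrightarrow> y \<in> setcirc c {x} I)"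
    using DD by (elim conjE) assumption
  have F50: "\<forall>x\<in>W. \<forall>y\<in>W. \<forall>z\<in>W. tld z \<in> c x y \<longleftrightarrow> mn y \<in> c z x" using DD by (elim conjE) assumption
  have F60: "\<forall>x\<in>W. le (mn (tld x)) x \<and> le (tld (mn x)) x" using DD by (elim conjE) assumption
  have tW: "\<And>x. x \<in> W \<Longrightarrow> tld x \<in> W" using tW0 by blast
  have mW: "\<And>x. x \<in> W \<Longrightarrow> mn x \<in> W" using mW0 by blast
  have refl: "\<And>x. x \<in> W \<Longrightarrow> le x x" using refl0 by blast
  have anti: "\<And>x y. x \<in> W \<Longrightarrow> y \<in> W \<Longrightarrow> le x y \<Longrightarrow> le y x \<Longrightarrow> x = y" using anti0 by blast
  have F1: "\<And>x y. x \<in> W \<Longrightarrow> y \<in> W \<Longrightarrow> le x y \<longleftrightarrow> (\<exists>i\<in>I. y \<in> c x i)"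
    using F10 unfolding setcirc_single by blast
  have F1': "\<And>x y. x \<in> W \<Longrightarrow> y \<in> W \<Longrightarrow> le x y \<longleftrightarrow> (\<exists>i\<in>I. y \<in> c i x)"
    using F10 unfolding setcirc_def by blast
  have F5: "\<And>x y z. x \<in> W \<Longrightarrow> y \<in> W \<Longrightarrow> z \<in> W \<Longrightarrow> tld z \<in> c x y \<longleftrightarrow> mn y \<in> c z x"
    using F50 by blast
  have F6: "\<And>x. x \<in> W \<Longrightarrow> le (mn (tld x)) x \<and> le (tld (mn x)) x" using F60 by blast
  have nW: "\<And>x. x \<in> W \<Longrightarrow> ng x \<in> W" using Q by blast
  have nn: "\<And>x. x \<in> W \<Longrightarrow> ng (ng x) = x" using Q by blast
  have F9: "\<And>x y z. x \<in> W \<Longrightarrow> y \<in> W \<Longrightarrow> z \<in> W \<Longrightarrow> mn z \<in> c x y \<longleftrightarrow> ng z \<in> c (ng (tld y)) (ng (tld x))"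
    using Q by blast
  have tm: "tld (mn a) = a" if a: "a \<in> W" for a
  proof -
    obtain i where i: "i \<in> I" "mn a \<in> c (mn a) i" using F1[of "mn a" "mn a"] refl mW a by blast
    have "tld (mn a) \<in> c i a" using F5[of i a "mn a"] i IW a mW by blast
    hence "le a (tld (mn a))" using F1' a tW mW i by blast
    thus ?thesis using anti F6 a tW mW by blast
  qed
  have mt: "mn (tld a) = a" if a: "a \<in> W" for a
  proof -
    obtain i where i: "i \<in> I" "tld a \<in> c i (tld a)" using F1'[of "tld a" "tld a"] refl tW a by blast
    have "mn (tld a) \<in> c a i" using F5[of i "tld a" a] i IW a tW by blast
    hence "le a (mn (tld a))" using F1 a tW mW i by blast
    thus ?thesis using anti F6 a tW mW by blast
  qed
  have T: "w \<in> c X Z \<longleftrightarrow> ng Z \<in> c (ng (tld X)) (ng w)"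
    if "w \<in> W" "X \<in> W" "Z \<in> W" for w X Z
  proof -
    have "w \<in> c X Z \<longleftrightarrow> tld (mn w) \<in> c X Z" using tm that by simp
    also have "\<dots> \<longleftrightarrow> mn Z \<in> c (mn w) X" using F5 that mW by blast
    also have "\<dots> \<longleftrightarrow> ng Z \<in> c (ng (tld X)) (ng (tld (mn w)))" using F9 that mW by blast
    also have "\<dots> \<longleftrightarrow> ng Z \<in> c (ng (tld X)) (ng w)" using tm that by simp
    finally show ?thesis .
  qed
  define N where "N = (\<lambda>a. ng (tld a))"
  have NW: "a \<in> W \<Longrightarrow> N a \<in> W" for a unfolding N_def using nW tW by blast
  have T2: "w \<in> c X Z \<longleftrightarrow> w \<in> c (N (N X)) Z" if "w \<in> W" "X \<in> W" "Z \<in> W" for w X Z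
  proof -
    have "w \<in> c X Z \<longleftrightarrow> ng Z \<in> c (N X) (ng w)" using T that unfolding N_def by blast
    also have "\<dots> \<longleftrightarrow> ng (ng w) \<in> c (N (N X)) (ng (ng Z))"
      using T[of "ng Z" "N X" "ng w"] that nW NW unfolding N_def by blast
    also have "\<dots> \<longleftrightarrow> w \<in> c (N (N X)) Z" using nn that by simp
    finally show ?thesis .
  qed
  have le_eq: "le X w \<longleftrightarrow> le (N (N X)) w" if "w \<in> W" "X \<in> W" for w X
    using F1[of X w] F1[of "N (N X)" w] T2[of w X] that NW IW by blast
  have NN: "N (N x) = x"
    using le_eq[of x x] le_eq[of "N (N x)" x] refl anti assms(2) NW by blast
  have "mn (ng (N (N x))) = mn (ng x)" using NN by simp
  moreover have "mn (ng (N (N x))) = ng (tld x)"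
    unfolding N_def using nn mt assms(2) tW nW by simp
  ultimately show ?thesis by simp
qed

end
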